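(* Let $E,F$ be normed spaces over $\mathbb K$ with $F$ spherically complete, let $D\subseteq E$ be a linear subspace and $S\in\mathcal L(D,F)$. Let $\mathcal U\subseteq\mathcal L(E,F)$ be nonempty and for each $U\in\mathcal U$ let $\epsilon_U>0$ be such that $\|U-V\|\le\max(\epsilon_U,\epsilon_V)$ for all $U,V\in\mathcal U$, and $\|Sx-Ux\|\le\epsilon_U\|x\|$ for all $U\in\mathcal U$ and $x\in D$. Then there exists $\overline S\in\mathcal L(E,F)$ with $\overline S|_D=S$ and $\|\overline S-U\|\le\epsilon_U$ for every $U\in\mathcal U$.
   Context: $\mathbb K$: nontrivially normed field with ultrametric absolute value; normed space over $\mathbb K$: normed vector space with $\|x+y\|\le\max(\|x\|,\|y\|)$. $\mathcal L(X,Y)$ is the space of continuous linear maps with operator norm. Spherically complete: every decreasing sequence of closed balls (radii $\ge0$) has nonempty intersection. *)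

theory Defs
  imports Complex_Main
begin

definition nonarch_valued_field :: "('k::field \<Rightarrow> real) \<Rightarrow> bool" where
  "nonarch_valued_field absK \<longleftrightarrow>
     (\<forall>a. absK a \<ge> 0) \<and> (\<forall>a. absK a = 0 \<longleftrightarrow> a = 0) \<and>
     (\<forall>a b. absK (a * b) = absK a * absK b) \<and>
     (\<forall>a b. absK (a + b) \<le> max (absK a) (absK b)) \<and>
     (\<exists>a. absK a \<noteq> 0 \<and> absK a \<noteq> 1)"

definition ultra_normed_space ::
  "('k::field \<Rightarrow> real) \<Rightarrow> ('k \<Rightarrow> 'v::ab_group_add \<Rightarrow> 'v) \<Rightarrow> ('v \<Rightarrow> real) \<Rightarrow> bool" where
  "ultra_normed_space absK sm nv \<longleftrightarrow>
     (\<forall>a x y. sm a (x + y) = sm a x + sm a y) \<and>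
     (\<forall>a b x. sm (a + b) x = sm a x + sm b x) \<and>
     (\<forall>a b x. sm (a * b) x = sm a (sm b x)) \<and>
     (\<forall>x. sm 1 x = x) \<and>
     (\<forall>x. nv x \<ge> 0) \<and> (\<forall>x. nv x = 0 \<longleftrightarrow> x = 0) \<and>
     (\<forall>a x. nv (sm a x) = absK a * nv x) \<and>
     (\<forall>x y. nv (x + y) \<le> max (nv x) (nv y))"

definition ncball :: "('v::ab_group_add \<Rightarrow> real) \<Rightarrow> 'v \<Rightarrow> real \<Rightarrow> 'v set" where
  "ncball nv c r = {y. nv (y - c) \<le> r}"

definition spherically_complete :: "('v::ab_group_add \<Rightarrow> real) \<Rightarrow> bool" where
  "spherically_complete nv \<longleftrightarrow>
     (\<forall>(c::nat \<Rightarrow> 'v) (r::nat \<Rightarrow> real).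
        (\<forall>n. r n \<ge> 0) \<and> (\<forall>n. ncball nv (c (Suc n)) (r (Suc n)) \<subseteq> ncball nv (c n) (r n))
        \<longrightarrow> (\<Inter>n. ncball nv (c n) (r n)) \<noteq> {})"

definition linear_subspace :: "('k \<Rightarrow> 'v::ab_group_add \<Rightarrow> 'v) \<Rightarrow> 'v set \<Rightarrow> bool" where
  "linear_subspace sm D \<longleftrightarrow> 0 \<in> D \<and> (\<forall>x\<in>D. \<forall>y\<in>D. x + y \<in> D) \<and> (\<forall>a. \<forall>x\<in>D. sm a x \<in> D)"

definition cont_linear_on ::
  "('k \<Rightarrow> 'v::ab_group_add \<Rightarrow> 'v) \<Rightarrow> ('v \<Rightarrow> real) \<Rightarrow> ('k \<Rightarrow> 'w::ab_group_add \<Rightarrow> 'w) \<Rightarrow> ('w \<Rightarrow> real)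
    \<Rightarrow> 'v set \<Rightarrow> ('v \<Rightarrow> 'w) \<Rightarrow> bool" where
  "cont_linear_on smv nv smw nw X T \<longleftrightarrow>
     (\<forall>x\<in>X. \<forall>y\<in>X. T (x + y) = T x + T y) \<and>
     (\<forall>a. \<forall>x\<in>X. T (smv a x) = smw a (T x)) \<and>
     (\<forall>x\<in>X. \<forall>e>0. \<exists>d>0. \<forall>y\<in>X. nv (y - x) < d \<longrightarrow> nw (T y - T x) < e)"

definition opnorm :: "('v::ab_group_add \<Rightarrow> real) \<Rightarrow> ('w \<Rightarrow> real) \<Rightarrow> 'v set \<Rightarrow> ('v \<Rightarrow> 'w) \<Rightarrow> real" where
  "opnorm nv nw X T = Sup ({nw (T x) / nv x | x. x \<in> X \<and> x \<noteq> 0} \<union> {0})"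

end

theory Submission
  imports Defs
begin

lemma K_facts:
  assumes K: "nonarch_valued_field absK"
  shows K_nn: "absK a \<ge> 0" and K_0: "absK a = 0 \<longleftrightarrow> a = 0"
    and K_mult: "absK (a * b) = absK a * absK b"
    and K_ultra: "absK (a + b) \<le> max (absK a) (absK b)"
  using K unfolding nonarch_valued_field_def by auto

lemma K_one: assumes K: "nonarch_valued_field absK" shows "absK 1 = 1"
proof -
  have "absK 1 = absK 1 * absK 1" using K_mult[OF K, of 1 1] by simp
  moreover have "absK 1 \<noteq> 0" using K_0[OF K, of 1] by simp
  ultimately show ?thesis by (metis mult_cancel_right1)
qed

lemma K_m1: assumes K: "nonarch_valued_field absK" shows "absK (-1) = 1"
proof -
  have "absK (-1) * absK (-1) = 1" using K_mult[OF K, of "-1" "-1"] K_one[OF K] by simp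
  moreover have "absK (-1) \<ge> 0" using K_nn[OF K] .
  ultimately show ?thesis by (metis power2_eq_square power2_eq_1_iff neg_0_le_iff_le not_one_le_zero)
qed

lemma K_inv: assumes K: "nonarch_valued_field absK" and "a \<noteq> 0"
  shows "absK (inverse a) = inverse (absK a)"
proof -
  have "absK a * absK (inverse a) = 1" using K_mult[OF K, of a "inverse a"] K_one[OF K] assms(2) by simp
  thus ?thesis by (metis inverse_unique)
qed

lemma K_pow: assumes K: "nonarch_valued_field absK" shows "absK (a ^ n) = absK a ^ n"
  by (induction n) (simp_all add: K_one[OF K] K_mult[OF K])

lemma K_powi: assumes K: "nonarch_valued_field absK" and "a \<noteq> 0"
  shows "absK (a powi k) = absK a powi k"
  using assms by (simp add: power_int_def K_pow[OF K] K_inv[OF K] power_inverse)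

lemma K_big: assumes K: "nonarch_valued_field absK" shows "\<exists>p. absK p > 1"
proof -
  obtain a where a: "absK a \<noteq> 0" "absK a \<noteq> 1" using K unfolding nonarch_valued_field_def by auto
  have a0: "a \<noteq> 0" using a K_0[OF K] by auto
  have pos: "absK a > 0" using a K_nn[OF K, of a] by auto
  show ?thesis
  proof (cases "absK a > 1")
    case True thus ?thesis by blast
  next
    case False
    hence "absK a < 1" using a by auto
    hence "absK (inverse a) > 1" using K_inv[OF K a0] pos by (simp add: one_less_inverse)
    thus ?thesis by blast
  qed
qed

lemma V_facts:
  assumes V: "ultra_normed_space absK sm nv"
  shows sm_add: "sm a (x + y) = sm a x + sm a y"
    and sm_addl: "sm (a + b) x = sm a x + sm b x"
    and sm_mult: "sm (a * b) x = sm a (sm b x)"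
    and sm_one: "sm 1 x = x"
    and nv_nn: "nv x \<ge> 0" and nv_0: "nv x = 0 \<longleftrightarrow> x = 0"
    and nv_sm: "nv (sm a x) = absK a * nv x"
    and nv_ultra: "nv (x + y) \<le> max (nv x) (nv y)"
  using V unfolding ultra_normed_space_def by auto

lemma sm_zerol: assumes V: "ultra_normed_space absK sm nv" shows "sm 0 x = 0"
  using sm_addl[OF V, of 0 0 x] by simp

lemma sm_zeror: assumes V: "ultra_normed_space absK sm nv" shows "sm a 0 = 0"
  using sm_add[OF V, of a 0 0] by simp

lemma sm_neg1: assumes V: "ultra_normed_space absK sm nv" shows "sm (-1) x = - x"
  using sm_addl[OF V, of 1 "-1" x] sm_zerol[OF V] sm_one[OF V] by (simp add: eq_neg_iff_add_eq_0 add.commute)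

lemma sm_negr: assumes V: "ultra_normed_space absK sm nv" shows "sm a (- x) = - sm a x"
  using sm_add[OF V, of a x "-x"] sm_zeror[OF V] by (simp add: eq_neg_iff_add_eq_0 add.commute)

lemma sm_diff: assumes V: "ultra_normed_space absK sm nv" shows "sm a (x - y) = sm a x - sm a y"
  using sm_add[OF V, of a x "-y"] sm_negr[OF V] by simp

lemma sm_diffl: assumes V: "ultra_normed_space absK sm nv" shows "sm (a - b) x = sm a x - sm b x"
  using sm_addl[OF V, of a "-b" x] sm_mult[OF V, of "-1" b x] sm_neg1[OF V] by simp

lemma sm_inv: assumes V: "ultra_normed_space absK sm nv" and "a \<noteq> 0"
  shows "sm (inverse a) (sm a x) = x"
  using sm_mult[OF V, of "inverse a" a x] assms(2) sm_one[OF V] by simp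

lemma nv_neg: assumes K: "nonarch_valued_field absK" and V: "ultra_normed_space absK sm nv"
  shows "nv (- x) = nv x"
  using nv_sm[OF V, of "-1" x] sm_neg1[OF V] K_m1[OF K] by simp

lemma nv_commute: assumes K: "nonarch_valued_field absK" and V: "ultra_normed_space absK sm nv"
  shows "nv (x - y) = nv (y - x)"
  using nv_neg[OF K V, of "x - y"] by simp

lemma nv_tri: assumes V: "ultra_normed_space absK sm nv"
  shows "nv (x - z) \<le> max (nv (x - y)) (nv (y - z))"
  using nv_ultra[OF V, of "x - y" "y - z"] by simp

lemma nv_diff: assumes K: "nonarch_valued_field absK" and V: "ultra_normed_space absK sm nv"
  shows "nv (x - y) \<le> max (nv x) (nv y)"
  using nv_ultra[OF V, of x "-y"] nv_neg[OF K V, of y] by simp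


lemma powr_powi: "(c::real) > 0 \<Longrightarrow> c powr (real_of_int k) = c powi k"
  by (simp add: powr_real_of_int power_int_def power_inverse)

lemma cl_zero: assumes "cont_linear_on smv nv smw nw X T" "0 \<in> X"
  shows "T 0 = 0"
proof -
  have "T (0 + 0) = T 0 + T 0" using assms unfolding cont_linear_on_def by blast
  thus ?thesis by simp
qed

lemma cl_bounded:
  assumes K: "nonarch_valued_field absK"
    and E: "ultra_normed_space absK smE nE"
    and F: "ultra_normed_space absK smF nF"
    and T: "cont_linear_on smE nE smF nF UNIV T"
  shows "\<exists>C. \<forall>x. nF (T x) \<le> C * nE x"
proof -
  have T0: "T 0 = 0" using cl_zero[OF T] by simp
  obtain d where d: "d > 0" "\<forall>y. nE (y - 0) < d \<longrightarrow> nF (T y - T 0) < 1"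
    using T unfolding cont_linear_on_def by (meson UNIV_I zero_less_one)
  hence dd: "nE y < d \<Longrightarrow> nF (T y) < 1" for y using T0 by auto
  obtain p where p: "absK p > 1" using K_big[OF K] by blast
  define c where "c = absK p"
  have c1: "c > 1" using p c_def by simp
  have p0: "p \<noteq> 0" using p K_0[OF K, of p] by auto
  have "nF (T x) \<le> (c / d) * nE x" for x
  proof (cases "x = 0")
    case True
    have "nF 0 = 0" "nE 0 = 0" using nv_0[OF F] nv_0[OF E] by auto
    thus ?thesis using T0 True by simp
  next
    case False
    hence nx: "nE x > 0" using nv_0[OF E, of x] nv_nn[OF E, of x] by auto
    define t where "t = log c (d / nE x)"
    define k where "k = \<lceil>t\<rceil> - 1"
    have kt: "real_of_int k < t" "t \<le> real_of_int k + 1" unfolding k_def by linarith+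
    have ct: "c powr t = d / nE x" unfolding t_def using c1 d nx by simp
    have "c powr (real_of_int k) < c powr t" using kt c1 by simp
    hence ck: "c powi k < d / nE x" using ct powr_powi c1 by simp
    have "c powr t \<le> c powr (real_of_int (k + 1))" using kt c1 by simp
    hence ck1: "d / nE x \<le> c powi (k + 1)" using ct powr_powi[of c "k+1"] c1 by simp
    have cpos: "c powi k > 0" using c1 by simp
    have ck1': "c powi (k + 1) = c * c powi k" using c1 by (simp add: power_int_add)
    define y where "y = smE (p powi k) x"
    have ny: "nE y = c powi k * nE x" unfolding y_def using nv_sm[OF E] K_powi[OF K p0] c_def by simp
    have "nE y < d" using ny ck nx by (simp add: pos_less_divide_eq)
    hence "nF (T y) < 1" by (rule dd)
    moreover have "T y = smF (p powi k) (T x)" unfolding y_def using T unfolding cont_linear_on_def by blast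
    ultimately have "c powi k * nF (T x) < 1" using nv_sm[OF F] K_powi[OF K p0] c_def by simp
    hence "nF (T x) < 1 / c powi k" using cpos by (simp add: field_simps)
    also have "1 / c powi k \<le> (c / d) * nE x"
    proof -
      have "d \<le> c * c powi k * nE x" using ck1 ck1' nx by (simp add: pos_divide_le_eq)
      thus ?thesis using cpos d nx by (simp add: field_simps)
    qed
    finally show ?thesis by simp
  qed
  thus ?thesis by blast
qed

lemma opnorm_le:
  assumes K: "nonarch_valued_field absK"
    and E: "ultra_normed_space absK smE nE"
    and F: "ultra_normed_space absK smF nF"
    and U: "cont_linear_on smE nE smF nF UNIV U"
    and V: "cont_linear_on smE nE smF nF UNIV V"
    and le: "opnorm nE nF UNIV (\<lambda>x. U x - V x) \<le> m"
  shows "nF (U x - V x) \<le> m * nE x"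
proof -
  obtain C1 where C1: "\<forall>x. nF (U x) \<le> C1 * nE x" using cl_bounded[OF K E F U] by blast
  obtain C2 where C2: "\<forall>x. nF (V x) \<le> C2 * nE x" using cl_bounded[OF K E F V] by blast
  let ?X = "{nF (U x - V x) / nE x | x. x \<in> UNIV \<and> x \<noteq> 0} \<union> {0}"
  have bdd: "bdd_above ?X"
  proof (rule bdd_aboveI[of _ "max (max C1 C2) 0"])
    fix r assume "r \<in> ?X"
    then consider "r = 0" | x where "x \<noteq> 0" "r = nF (U x - V x) / nE x" by blast
    thus "r \<le> max (max C1 C2) 0"
    proof cases
      case 2
      have nx: "nE x > 0" using 2 nv_0[OF E, of x] nv_nn[OF E, of x] by auto
      have "nF (U x - V x) \<le> max (nF (U x)) (nF (V x))" by (rule nv_diff[OF K F])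
      also have "\<dots> \<le> max C1 C2 * nE x" using C1 C2 nx
        by (metis max.mono max_mult_distrib_right nv_nn[OF E])
      also have "\<dots> \<le> max (max C1 C2) 0 * nE x" using nx by (intro mult_right_mono) auto
      finally show ?thesis using 2 nx by (simp add: divide_le_eq)
    qed simp
  qed
  show ?thesis
  proof (cases "x = 0")
    case True
    have "nF 0 = 0" "nE 0 = 0" using nv_0[OF F] nv_0[OF E] by auto
    thus ?thesis using cl_zero[OF U] cl_zero[OF V] True by simp
  next
    case False
    have nx: "nE x > 0" using False nv_0[OF E, of x] nv_nn[OF E, of x] by auto
    have "nF (U x - V x) / nE x \<in> ?X" using False by blast
    hence "nF (U x - V x) / nE x \<le> Sup ?X" using cSup_upper[OF _ bdd] by blast
    hence "nF (U x - V x) / nE x \<le> m" using le unfolding opnorm_def by linarith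
    thus ?thesis using nx by (simp add: divide_le_eq)
  qed
qed


lemma sc_family:
  assumes K: "nonarch_valued_field absK"
    and F: "ultra_normed_space absK smF nF"
    and Fsc: "spherically_complete nF"
    and I: "I \<noteq> {}" and r: "\<forall>i\<in>I. r i \<ge> 0"
    and cr: "\<forall>i\<in>I. \<forall>j\<in>I. nF (c i - c j) \<le> max (r i) (r j)"
  shows "\<exists>y. \<forall>i\<in>I. nF (y - c i) \<le> r i"
proof -
  have cont: "nF (y - c j) \<le> r j" if "i \<in> I" "j \<in> I" "r i \<le> r j" "nF (y - c i) \<le> r i" for i j y
  proof -
    have "nF (y - c j) \<le> max (nF (y - c i)) (nF (c i - c j))" by (rule nv_tri[OF F])
    moreover have "nF (c i - c j) \<le> r j" using cr that by fastforce
    ultimately show ?thesis using that by linarith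
  qed
  define \<rho> where "\<rho> = Inf (r ` I)"
  have bdd: "bdd_below (r ` I)" using r by (meson bdd_belowI2)
  have rho_le: "\<rho> \<le> r i" if "i \<in> I" for i unfolding \<rho>_def using cInf_lower[OF _ bdd] that by blast
  show ?thesis
  proof (cases "\<exists>i0\<in>I. r i0 = \<rho>")
    case True
    then obtain i0 where i0: "i0 \<in> I" "r i0 = \<rho>" by blast
    have "nF (c i0 - c i0) \<le> r i0" using nv_0[OF F, of 0] r i0 by force
    hence "\<forall>i\<in>I. nF (c i0 - c i) \<le> r i" using cont[OF i0(1)] i0 rho_le by blast
    thus ?thesis by blast
  next
    case False
    hence gt: "\<forall>i\<in>I. \<rho> < r i" using rho_le by force
    have ex: "\<exists>j\<in>I. r j < min (r i) (\<rho> + e)" if "i \<in> I" "e > 0" for i e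
    proof -
      have "Inf (r ` I) < min (r i) (\<rho> + e)" using gt that \<rho>_def by auto
      thus ?thesis using cInf_lessD[of "r ` I"] I by blast
    qed
    define nxt where "nxt = (\<lambda>n i. SOME j. j \<in> I \<and> r j < min (r i) (\<rho> + 1 / real (Suc n)))"
    obtain i0 where i0: "i0 \<in> I" using I by blast
    define f where "f = rec_nat i0 nxt"
    have f0: "f 0 = i0" and fS: "f (Suc n) = nxt n (f n)" for n unfolding f_def by simp_all
    have fI: "f n \<in> I \<and> (\<forall>m. n = Suc m \<longrightarrow> r (f n) < min (r (f m)) (\<rho> + 1 / real (Suc m)))" for n
    proof (induction n)
      case 0 thus ?case using f0 i0 by simp
    next
      case (Suc n)
      have "\<exists>j. j \<in> I \<and> r j < min (r (f n)) (\<rho> + 1 / real (Suc n))"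
        using ex[of "f n" "1 / real (Suc n)"] Suc by auto
      hence "f (Suc n) \<in> I \<and> r (f (Suc n)) < min (r (f n)) (\<rho> + 1 / real (Suc n))"
        unfolding fS nxt_def by (rule someI_ex)
      thus ?case by simp
    qed
    have "(\<Inter>n. ncball nF (c (f n)) (r (f n))) \<noteq> {}"
    proof -
      have "\<forall>n. r (f n) \<ge> 0" using fI r by blast
      moreover have "\<forall>n. ncball nF (c (f (Suc n))) (r (f (Suc n))) \<subseteq> ncball nF (c (f n)) (r (f n))"
      proof (intro allI subsetI)
        fix n y assume "y \<in> ncball nF (c (f (Suc n))) (r (f (Suc n)))"
        hence "nF (y - c (f (Suc n))) \<le> r (f (Suc n))" unfolding ncball_def by simp
        moreover have "r (f (Suc n)) \<le> r (f n)" using fI[of "Suc n"] by simp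
        ultimately have "nF (y - c (f n)) \<le> r (f n)" using cont fI by blast
        thus "y \<in> ncball nF (c (f n)) (r (f n))" unfolding ncball_def by simp
      qed
      ultimately show ?thesis
        using Fsc[unfolded spherically_complete_def, rule_format, where c="\<lambda>n. c (f n)" and r="\<lambda>n. r (f n)"] by simp
    qed
    then obtain y where y: "\<forall>n. nF (y - c (f n)) \<le> r (f n)" unfolding ncball_def by blast
    have "nF (y - c i) \<le> r i" if i: "i \<in> I" for i
    proof -
      obtain n where n: "inverse (real (Suc n)) < r i - \<rho>" using gt i reals_Archimedean[of "r i - \<rho>"] by fastforce
      have "r (f (Suc n)) < \<rho> + 1 / real (Suc n)" using fI[of "Suc n"] by simp
      hence "r (f (Suc n)) \<le> r i" using n by (simp add: inverse_eq_divide)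
      thus ?thesis using cont[of "f (Suc n)" i y] fI i y by blast
    qed
    thus ?thesis by blast
  qed
qed


definition pext :: "('k \<Rightarrow> 'e::ab_group_add \<Rightarrow> 'e) \<Rightarrow> ('e \<Rightarrow> real) \<Rightarrow> ('k \<Rightarrow> 'f::ab_group_add \<Rightarrow> 'f)
   \<Rightarrow> ('f \<Rightarrow> real) \<Rightarrow> ('e \<Rightarrow> 'f) set \<Rightarrow> (('e \<Rightarrow> 'f) \<Rightarrow> real) \<Rightarrow> ('e \<times> 'f) set \<Rightarrow> bool" where
  "pext smE nE smF nF UU eps G \<longleftrightarrow>
     (\<forall>x y y'. (x,y) \<in> G \<longrightarrow> (x,y') \<in> G \<longrightarrow> y = y') \<and> G \<noteq> {} \<and>
     (\<forall>x y x' y'. (x,y) \<in> G \<longrightarrow> (x',y') \<in> G \<longrightarrow> (x + x', y + y') \<in> G) \<and>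
     (\<forall>a x y. (x,y) \<in> G \<longrightarrow> (smE a x, smF a y) \<in> G) \<and>
     (\<forall>x y. (x,y) \<in> G \<longrightarrow> (\<forall>U\<in>UU. nF (y - U x) \<le> eps U * nE x))"

lemma cl_lin: assumes "cont_linear_on smE nE smF nF UNIV U"
  shows cl_add: "U (x + y) = U x + U y" and cl_sm: "U (smE a x) = smF a (U x)"
    and cl_diff: "U (x - y) = U x - U y"
proof -
  show a: "U (x + y) = U x + U y" for x y using assms unfolding cont_linear_on_def by blast
  show "U (smE a x) = smF a (U x)" using assms unfolding cont_linear_on_def by blast
  have "U (x - y + y) = U (x - y) + U y" by (rule a)
  thus "U (x - y) = U x - U y" by (simp add: eq_diff_eq)
qed

lemma extend:
  fixes absK :: "'k::field \<Rightarrow> real"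
    and smE :: "'k \<Rightarrow> 'e::ab_group_add \<Rightarrow> 'e" and nE :: "'e \<Rightarrow> real"
    and smF :: "'k \<Rightarrow> 'f::ab_group_add \<Rightarrow> 'f" and nF :: "'f \<Rightarrow> real"
    and UU :: "('e \<Rightarrow> 'f) set" and eps :: "('e \<Rightarrow> 'f) \<Rightarrow> real"
  assumes K: "nonarch_valued_field absK"
    and E: "ultra_normed_space absK smE nE"
    and F: "ultra_normed_space absK smF nF"
    and Fsc: "spherically_complete nF"
    and U_sub: "\<forall>U\<in>UU. cont_linear_on smE nE smF nF UNIV U"
    and U_ne: "UU \<noteq> {}"
    and eps_pos: "\<forall>U\<in>UU. eps U > 0"
    and UVb: "\<forall>U\<in>UU. \<forall>V\<in>UU. \<forall>x. nF (U x - V x) \<le> max (eps U) (eps V) * nE x"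
    and G: "pext smE nE smF nF UU eps G"
    and z: "z \<notin> Domain G"
  shows "\<exists>G'. pext smE nE smF nF UU eps G' \<and> G \<subseteq> G' \<and> z \<in> Domain G'"
proof -
  note simps = sm_add[OF E] sm_addl[OF E] sm_diff[OF E] sm_diffl[OF E]
               sm_add[OF F] sm_addl[OF F] sm_diff[OF F] sm_diffl[OF F]
  have funG: "\<And>x y y'. (x,y) \<in> G \<Longrightarrow> (x,y') \<in> G \<Longrightarrow> y = y'"
    and ne: "G \<noteq> {}"
    and addc: "\<And>x y x' y'. (x,y) \<in> G \<Longrightarrow> (x',y') \<in> G \<Longrightarrow> (x + x', y + y') \<in> G"
    and smc: "\<And>a x y. (x,y) \<in> G \<Longrightarrow> (smE a x, smF a y) \<in> G"
    and bnd: "\<And>x y U. (x,y) \<in> G \<Longrightarrow> U \<in> UU \<Longrightarrow> nF (y - U x) \<le> eps U * nE x"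
    using G unfolding pext_def by blast+
  define M where "M = Domain G"
  define T where "T m = (THE y. (m,y) \<in> G)" for m
  have TG: "(m, T m) \<in> G" if "m \<in> M" for m
  proof -
    have "\<exists>!y. (m,y) \<in> G" using that funG unfolding M_def by blast
    thus ?thesis unfolding T_def by (rule theI')
  qed
  have Tu: "T m = y" if "(m,y) \<in> G" for m y
    using TG[of m] that funG unfolding M_def by blast
  have Madd: "m1 + m2 \<in> M" if "m1 \<in> M" "m2 \<in> M" for m1 m2
    using addc[OF TG[OF that(1)] TG[OF that(2)]] unfolding M_def by blast
  have Msm: "smE a m \<in> M" if "m \<in> M" for a m
    using smc[OF TG[OF that]] unfolding M_def by blast
  have M0: "0 \<in> M"
  proof -
    obtain x y where "(x,y) \<in> G" using ne by auto
    hence "(smE 0 x, smF 0 y) \<in> G" by (rule smc)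
    thus ?thesis using sm_zerol[OF E] unfolding M_def by force
  qed
  have Tadd: "T (m1 + m2) = T m1 + T m2" if "m1 \<in> M" "m2 \<in> M" for m1 m2
    using Tu addc[OF TG[OF that(1)] TG[OF that(2)]] by blast
  have Tsm: "T (smE a m) = smF a (T m)" if "m \<in> M" for a m
    using Tu smc[OF TG[OF that]] by blast
  have Mdiff: "m1 - m2 \<in> M" and Tdiff: "T (m1 - m2) = T m1 - T m2" if "m1 \<in> M" "m2 \<in> M" for m1 m2
  proof -
    have eq: "m1 - m2 = m1 + smE (-1) m2" using sm_neg1[OF E] by simp
    show "m1 - m2 \<in> M" unfolding eq using that Madd Msm by blast
    show "T (m1 - m2) = T m1 - T m2" unfolding eq using that Madd Msm Tadd Tsm sm_neg1[OF F] by simp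
  qed
  have Tb: "nF (T m - U m) \<le> eps U * nE m" if "m \<in> M" "U \<in> UU" for m U
    using bnd[OF TG[OF that(1)] that(2)] .
  have zM: "z + m \<noteq> 0" if "m \<in> M" for m
  proof
    assume "z + m = 0"
    hence "z = 0 - m" by (simp add: eq_neg_iff_add_eq_0 add.commute)
    thus False using Mdiff[OF M0 that] z unfolding M_def by simp
  qed
  define c where "c p = fst p (z + snd p) - T (snd p)" for p :: "('e \<Rightarrow> 'f) \<times> 'e"
  define r where "r p = eps (fst p) * nE (z + snd p)" for p :: "('e \<Rightarrow> 'f) \<times> 'e"
  have key: "nF (c (U,m) - c (V,m')) \<le> max (r (U,m)) (r (V,m'))"
    if UV: "U \<in> UU" "V \<in> UU" and mm: "m \<in> M" "m' \<in> M" and le: "eps U \<le> eps V" for U V m m'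
  proof -
    define w where "w = m' - m"
    have wM: "w \<in> M" unfolding w_def using Mdiff mm by blast
    have Ul: "cont_linear_on smE nE smF nF UNIV U" using U_sub UV by blast
    have "U (z + m') - U (z + m) = U w" unfolding w_def using cl_diff[OF Ul, of "z + m'" "z + m"] by simp
    moreover have "T w = T m' - T m" unfolding w_def using Tdiff mm by blast
    ultimately have eq: "c (U,m) - c (V,m') = (U (z + m') - V (z + m')) + (T w - U w)"
      unfolding c_def by (simp add: algebra_simps)
    define A where "A = nE (z + m)"
    define B where "B = nE (z + m')"
    have A0: "A \<ge> 0" "B \<ge> 0" unfolding A_def B_def using nv_nn[OF E] by auto
    have e0: "eps U > 0" "eps V > 0" using eps_pos UV by auto
    have t1: "nF (U (z + m') - V (z + m')) \<le> eps V * B"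
      using UVb UV le unfolding B_def by (metis max.absorb2)
    have "nE w = nE ((z + m') - (z + m))" unfolding w_def by simp
    also have "\<dots> \<le> max B A" unfolding A_def B_def by (rule nv_diff[OF K E])
    finally have nw: "nE w \<le> max A B" by simp
    have t2: "nF (T w - U w) \<le> eps U * max A B"
      using Tb[OF wM UV(1)] nw e0 by (meson less_imp_le mult_left_mono order_trans)
    have "eps U * max A B \<le> max (eps U * A) (eps V * B)"
      using e0 A0 le by (simp add: max_def mult_left_mono mult_right_mono) (smt (verit) mult_left_mono mult_right_mono)
    hence "nF (c (U,m) - c (V,m')) \<le> max (eps V * B) (max (eps U * A) (eps V * B))"
      using eq nv_ultra[OF F, of "U (z + m') - V (z + m')" "T w - U w"] t1 t2 by auto
    thus ?thesis unfolding r_def A_def B_def by simp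
  qed
  have pair: "\<forall>p\<in>UU \<times> M. \<forall>q\<in>UU \<times> M. nF (c p - c q) \<le> max (r p) (r q)"
  proof (intro ballI)
    fix p q assume p: "p \<in> UU \<times> M" and q: "q \<in> UU \<times> M"
    obtain U m where pp: "p = (U,m)" "U \<in> UU" "m \<in> M" using p by auto
    obtain V m' where qq: "q = (V,m')" "V \<in> UU" "m' \<in> M" using q by auto
    show "nF (c p - c q) \<le> max (r p) (r q)"
    proof (cases "eps U \<le> eps V")
      case True thus ?thesis using key pp qq by simp
    next
      case False
      hence "nF (c q - c p) \<le> max (r q) (r p)" using key pp qq by simp
      thus ?thesis using nv_commute[OF K F, of "c p" "c q"] by (simp add: max.commute)
    qed
  qed
  have rnn: "\<forall>p\<in>UU \<times> M. r p \<ge> 0" unfolding r_def using eps_pos nv_nn[OF E] by fastforce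
  have Ine: "UU \<times> M \<noteq> {}" using U_ne M0 by blast
  obtain y0 where y0: "\<forall>p\<in>UU \<times> M. nF (y0 - c p) \<le> r p"
    using sc_family[OF K F Fsc Ine rnn pair] by blast
  define G' where "G' = {(m + smE a z, T m + smF a y0) | m a. m \<in> M}"
  have inj: "m1 = m2 \<and> a1 = a2" if "m1 \<in> M" "m2 \<in> M" "m1 + smE a1 z = m2 + smE a2 z" for m1 m2 a1 a2
  proof -
    have eq: "smE (a1 - a2) z = m2 - m1" unfolding sm_diffl[OF E] using that(3)
      by (metis add.commute add_diff_cancel_left diff_diff_eq2 diff_add_cancel add_diff_eq)
    have "a1 = a2"
    proof (rule ccontr)
      assume "a1 \<noteq> a2"
      hence "a1 - a2 \<noteq> 0" by simp
      hence "z = smE (inverse (a1 - a2)) (m2 - m1)" using eq sm_inv[OF E] by metis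
      hence "z \<in> M" using Msm Mdiff that by simp
      thus False using z unfolding M_def by simp
    qed
    thus ?thesis using that(3) by simp
  qed
  have p1: "\<forall>x y y'. (x,y) \<in> G' \<longrightarrow> (x,y') \<in> G' \<longrightarrow> y = y'"
    unfolding G'_def using inj by fastforce
  have p2: "G' \<noteq> {}" unfolding G'_def using M0 by blast
  have p3: "\<forall>x y x' y'. (x,y) \<in> G' \<longrightarrow> (x',y') \<in> G' \<longrightarrow> (x + x', y + y') \<in> G'"
  proof (intro allI impI)
    fix x y x' y' assume "(x,y) \<in> G'" "(x',y') \<in> G'"
    then obtain m a m' a' where h: "m \<in> M" "m' \<in> M" "x = m + smE a z" "y = T m + smF a y0"
      "x' = m' + smE a' z" "y' = T m' + smF a' y0" unfolding G'_def by blast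
    have "x + x' = (m + m') + smE (a + a') z" "y + y' = T (m + m') + smF (a + a') y0"
      using h Tadd simps by (simp_all add: algebra_simps)
    thus "(x + x', y + y') \<in> G'" unfolding G'_def using Madd h by blast
  qed
  have p4: "\<forall>b x y. (x,y) \<in> G' \<longrightarrow> (smE b x, smF b y) \<in> G'"
  proof (intro allI impI)
    fix b x y assume "(x,y) \<in> G'"
    then obtain m a where h: "m \<in> M" "x = m + smE a z" "y = T m + smF a y0" unfolding G'_def by blast
    have "smE b x = smE b m + smE (b * a) z" "smF b y = T (smE b m) + smF (b * a) y0"
      using h Tsm simps sm_mult[OF E] sm_mult[OF F] by simp_all
    thus "(smE b x, smF b y) \<in> G'" unfolding G'_def using Msm h by blast
  qed
  have p5: "\<forall>x y. (x,y) \<in> G' \<longrightarrow> (\<forall>U\<in>UU. nF (y - U x) \<le> eps U * nE x)"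
  proof (intro allI impI ballI)
    fix x y U assume "(x,y) \<in> G'" and U: "U \<in> UU"
    then obtain m a where h: "m \<in> M" "x = m + smE a z" "y = T m + smF a y0" unfolding G'_def by blast
    have Ul: "cont_linear_on smE nE smF nF UNIV U" using U_sub U by blast
    show "nF (y - U x) \<le> eps U * nE x"
    proof (cases "a = 0")
      case True
      thus ?thesis using h Tb[OF h(1) U] sm_zerol[OF E] sm_zerol[OF F] by simp
    next
      case False
      define m' where "m' = smE (inverse a) m"
      have m'M: "m' \<in> M" unfolding m'_def using Msm h by blast
      have mm: "m = smE a m'" unfolding m'_def using sm_mult[OF E] False sm_one[OF E] by (simp flip: sm_mult[OF E])
      have x: "x = smE a (z + m')" using h mm simps by (simp add: add.commute)
      have Ux: "U x = smF a (U (z + m'))" unfolding x by (rule cl_sm[OF Ul])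
      have "y = smF a (T m') + smF a y0" using h(3) mm Tsm[OF m'M] by simp
      hence y1: "y - U x = smF a (T m') + smF a y0 - smF a (U (z + m'))" using Ux by simp
      have "y0 - c (U,m') = (T m' + y0) - U (z + m')" unfolding c_def by (simp add: algebra_simps)
      hence "smF a (y0 - c (U,m')) = smF a (T m') + smF a y0 - smF a (U (z + m'))"
        by (simp only: sm_add[OF F] sm_diff[OF F])
      hence y: "y - U x = smF a (y0 - c (U, m'))" using y1 by simp
      have "nF (y - U x) = absK a * nF (y0 - c (U, m'))" unfolding y by (rule nv_sm[OF F])
      also have "\<dots> \<le> absK a * (eps U * nE (z + m'))"
        using y0 U m'M K_nn[OF K, of a] unfolding r_def by (metis SigmaI fst_conv snd_conv mult_left_mono)
      also have "\<dots> = eps U * nE x" unfolding x nv_sm[OF E] by simp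
      finally show ?thesis .
    qed
  qed
  have sub: "G \<subseteq> G'"
  proof
    fix p assume p: "p \<in> G"
    obtain x y where xy: "p = (x,y)" by (cases p)
    have xM: "x \<in> M" using p xy unfolding M_def by force
    have "y = T x" using Tu p xy by simp
    hence "p = (x + smE 0 z, T x + smF 0 y0)" using xy sm_zerol[OF E] sm_zerol[OF F] by simp
    thus "p \<in> G'" unfolding G'_def using xM by blast
  qed
  have "z \<in> Domain G'"
  proof -
    have "(0 + smE 1 z, T 0 + smF 1 y0) \<in> G'" unfolding G'_def using M0 by blast
    thus ?thesis using sm_one[OF E] by force
  qed
  thus ?thesis using p1 p2 p3 p4 p5 sub unfolding pext_def by blast
qed


theorem proposition5p2:
  fixes absK :: "'k::field \<Rightarrow> real"
    and smE :: "'k \<Rightarrow> 'e::ab_group_add \<Rightarrow> 'e" and nE :: "'e \<Rightarrow> real"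
    and smF :: "'k \<Rightarrow> 'f::ab_group_add \<Rightarrow> 'f" and nF :: "'f \<Rightarrow> real"
    and D :: "'e set" and S :: "'e \<Rightarrow> 'f"
    and \<U> :: "('e \<Rightarrow> 'f) set" and eps :: "('e \<Rightarrow> 'f) \<Rightarrow> real"
  assumes K: "nonarch_valued_field absK"
    and E: "ultra_normed_space absK smE nE"
    and F: "ultra_normed_space absK smF nF"
    and Fsc: "spherically_complete nF"
    and D: "linear_subspace smE D"
    and S: "cont_linear_on smE nE smF nF D S"
    and U_sub: "\<forall>U\<in>\<U>. cont_linear_on smE nE smF nF UNIV U"
    and U_ne: "\<U> \<noteq> {}"
    and eps_pos: "\<forall>U\<in>\<U>. eps U > 0"
    and UV: "\<forall>U\<in>\<U>. \<forall>V\<in>\<U>. opnorm nE nF UNIV (\<lambda>x. U x - V x) \<le> max (eps U) (eps V)"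
    and SU: "\<forall>U\<in>\<U>. \<forall>x\<in>D. nF (S x - U x) \<le> eps U * nE x"
  shows "\<exists>Sbar. cont_linear_on smE nE smF nF UNIV Sbar \<and> (\<forall>x\<in>D. Sbar x = S x) \<and>
           (\<forall>U\<in>\<U>. opnorm nE nF UNIV (\<lambda>x. Sbar x - U x) \<le> eps U)"
proof -
  have UVb: "\<forall>U\<in>\<U>. \<forall>V\<in>\<U>. \<forall>x. nF (U x - V x) \<le> max (eps U) (eps V) * nE x"
    using opnorm_le[OF K E F] U_sub UV by blast
  define A where "A = {G. pext smE nE smF nF \<U> eps G \<and> (\<forall>x\<in>D. (x, S x) \<in> G)}"
  define GS where "GS = {(x, S x) | x. x \<in> D}"
  have D0: "0 \<in> D" and Dadd: "\<And>x y. x \<in> D \<Longrightarrow> y \<in> D \<Longrightarrow> x + y \<in> D"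
    and Dsm: "\<And>a x. x \<in> D \<Longrightarrow> smE a x \<in> D"
    using D unfolding linear_subspace_def by blast+
  have Sadd: "\<And>x y. x \<in> D \<Longrightarrow> y \<in> D \<Longrightarrow> S (x + y) = S x + S y"
    and Ssm: "\<And>a x. x \<in> D \<Longrightarrow> S (smE a x) = smF a (S x)"
    using S unfolding cont_linear_on_def by blast+
  have GSA: "GS \<in> A"
    unfolding A_def pext_def GS_def using D0 Dadd Dsm Sadd Ssm SU by (auto; metis)
  have "\<exists>M\<in>A. \<forall>X\<in>A. M \<subseteq> X \<longrightarrow> X = M"
  proof (rule Zorn_Lemma2, intro ballI)
    fix C assume C: "C \<in> chains A"
    show "\<exists>U\<in>A. \<forall>X\<in>C. X \<subseteq> U"
    proof (cases "C = {}")
      case True thus ?thesis using GSA by blast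
    next
      case False
      have CA: "C \<subseteq> A" and ch: "\<And>X Y. X \<in> C \<Longrightarrow> Y \<in> C \<Longrightarrow> X \<subseteq> Y \<or> Y \<subseteq> X"
        using C unfolding chains_def chain_subset_def by blast+
      have PC: "\<And>X. X \<in> C \<Longrightarrow> pext smE nE smF nF \<U> eps X" and DC: "\<And>X x. X \<in> C \<Longrightarrow> x \<in> D \<Longrightarrow> (x, S x) \<in> X"
        using CA unfolding A_def by blast+
      have "pext smE nE smF nF \<U> eps (\<Union>C)"
        unfolding pext_def
      proof (intro conjI allI impI ballI)
        fix x y y' assume "(x,y) \<in> \<Union>C" "(x,y') \<in> \<Union>C"
        then obtain X Y where "X \<in> C" "Y \<in> C" "(x,y) \<in> X" "(x,y') \<in> Y" by blast
        thus "y = y'" using ch PC unfolding pext_def by (metis subsetD)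
      next
        show "\<Union>C \<noteq> {}" using False PC unfolding pext_def by blast
      next
        fix x y x' y' assume "(x,y) \<in> \<Union>C" "(x',y') \<in> \<Union>C"
        then obtain X Y where "X \<in> C" "Y \<in> C" "(x,y) \<in> X" "(x',y') \<in> Y" by blast
        thus "(x + x', y + y') \<in> \<Union>C" using ch PC unfolding pext_def by (metis UnionI subsetD)
      next
        fix a x y assume "(x,y) \<in> \<Union>C"
        thus "(smE a x, smF a y) \<in> \<Union>C" using PC unfolding pext_def by blast
      next
        fix x y U assume "(x,y) \<in> \<Union>C" "U \<in> \<U>"
        thus "nF (y - U x) \<le> eps U * nE x" using PC unfolding pext_def by blast
      qed
      moreover have "\<forall>x\<in>D. (x, S x) \<in> \<Union>C" using DC False by blast
      ultimately show ?thesis unfolding A_def by blast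
    qed
  qed
  then obtain G where GA: "G \<in> A" and Gmax: "\<And>X. X \<in> A \<Longrightarrow> G \<subseteq> X \<Longrightarrow> X = G" by blast
  have GP: "pext smE nE smF nF \<U> eps G" and GD: "\<And>x. x \<in> D \<Longrightarrow> (x, S x) \<in> G"
    using GA unfolding A_def by blast+
  have dom: "x \<in> Domain G" for x
  proof (rule ccontr)
    assume "x \<notin> Domain G"
    then obtain G' where G': "pext smE nE smF nF \<U> eps G'" "G \<subseteq> G'" "x \<in> Domain G'"
      using extend[OF K E F Fsc U_sub U_ne eps_pos UVb GP] by blast
    have "G' \<in> A" using G' GD unfolding A_def by blast
    hence "G' = G" using Gmax G' by blast
    thus False using G' \<open>x \<notin> Domain G\<close> by simp
  qed
  have funG: "\<And>x y y'. (x,y) \<in> G \<Longrightarrow> (x,y') \<in> G \<Longrightarrow> y = y'"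
    and addc: "\<And>x y x' y'. (x,y) \<in> G \<Longrightarrow> (x',y') \<in> G \<Longrightarrow> (x + x', y + y') \<in> G"
    and smc: "\<And>a x y. (x,y) \<in> G \<Longrightarrow> (smE a x, smF a y) \<in> G"
    and bnd: "\<And>x y U. (x,y) \<in> G \<Longrightarrow> U \<in> \<U> \<Longrightarrow> nF (y - U x) \<le> eps U * nE x"
    using GP unfolding pext_def by blast+
  define Sb where "Sb x = (THE y. (x,y) \<in> G)" for x
  have SbG: "(x, Sb x) \<in> G" for x
  proof -
    have "\<exists>!y. (x,y) \<in> G" using dom[of x] funG by blast
    thus ?thesis unfolding Sb_def by (rule theI')
  qed
  have Sbu: "Sb x = y" if "(x,y) \<in> G" for x y using SbG[of x] that funG by blast
  have Sbadd: "Sb (x + y) = Sb x + Sb y" for x y using Sbu addc[OF SbG SbG] by blast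
  have Sbsm: "Sb (smE a x) = smF a (Sb x)" for a x using Sbu smc[OF SbG] by blast
  have SbD: "\<forall>x\<in>D. Sb x = S x" using Sbu GD by blast
  have Sbb: "nF (Sb x - U x) \<le> eps U * nE x" if "U \<in> \<U>" for U x using bnd[OF SbG that] .
  obtain U0 where U0: "U0 \<in> \<U>" using U_ne by blast
  have U0l: "cont_linear_on smE nE smF nF UNIV U0" using U_sub U0 by blast
  have e0: "eps U0 > 0" using eps_pos U0 by blast
  have cont: "\<exists>d>0. \<forall>y\<in>UNIV. nE (y - x) < d \<longrightarrow> nF (Sb y - Sb x) < e" if e: "e > 0" for x e
  proof -
    obtain d1 where d1: "d1 > 0" "\<forall>y\<in>UNIV. nE (y - x) < d1 \<longrightarrow> nF (U0 y - U0 x) < e"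
      using U0l e unfolding cont_linear_on_def by blast
    define d where "d = min d1 (e / eps U0)"
    have "d > 0" unfolding d_def using d1 e e0 by simp
    moreover have "nF (Sb y - Sb x) < e" if y: "nE (y - x) < d" for y
    proof -
      define w where "w = y - x"
      have "Sb y = Sb w + Sb x" unfolding w_def using Sbadd[of "y - x" x] by simp
      hence sw: "Sb y - Sb x = (Sb w - U0 w) + (U0 y - U0 x)"
        unfolding w_def using cl_diff[OF U0l, of y x] by simp
      have "nF (Sb w - U0 w) \<le> eps U0 * nE w" by (rule Sbb[OF U0])
      also have "\<dots> < eps U0 * (e / eps U0)" using y e0 unfolding w_def d_def by (intro mult_strict_left_mono) auto
      also have "\<dots> = e" using e0 by simp
      finally have t1: "nF (Sb w - U0 w) < e" .
      have t2: "nF (U0 y - U0 x) < e" using d1 y unfolding d_def by simp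
      show ?thesis unfolding sw using nv_ultra[OF F, of "Sb w - U0 w" "U0 y - U0 x"] t1 t2 by simp
    qed
    ultimately show ?thesis by blast
  qed
  have cl: "cont_linear_on smE nE smF nF UNIV Sb"
    unfolding cont_linear_on_def using Sbadd Sbsm cont by blast
  have opn: "opnorm nE nF UNIV (\<lambda>x. Sb x - U x) \<le> eps U" if U: "U \<in> \<U>" for U
    unfolding opnorm_def
  proof (rule cSup_least)
    show "{nF (Sb x - U x) / nE x |x. x \<in> UNIV \<and> x \<noteq> 0} \<union> {0} \<noteq> {}" by blast
  next
    fix r assume "r \<in> {nF (Sb x - U x) / nE x |x. x \<in> UNIV \<and> x \<noteq> 0} \<union> {0}"
    then consider "r = 0" | x where "x \<noteq> 0" "r = nF (Sb x - U x) / nE x" by blast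
    thus "r \<le> eps U"
    proof cases
      case 1 thus ?thesis using eps_pos U by force
    next
      case 2
      have nx: "nE x > 0" using 2 nv_0[OF E, of x] nv_nn[OF E, of x] by auto
      show ?thesis using 2 Sbb[OF U, of x] nx by (simp add: divide_le_eq)
    qed
  qed
  show ?thesis using cl SbD opn by blast
qed

end
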